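(* Let $R$ be the ring of integers of a nonarchimedean local field of characteristic not $2$ in which $2$ is a prime element. (a) If an $R$-lattice $J$ is isotropic, then $\mathbb{H}\perp J$ primitively represents all binary lattices of the form $2^a\mathbb{H}$ for every integer $a\ge0$. (b) If an $R$-lattice $J$ primitively represents $2^{a+1}\epsilon$ for an integer $a\ge0$ and a unit $\epsilon\in R$, then $\mathbb{H}\perp J$ primitively represents the binary lattices $2^a\mathbb{H}$ and $2^a\mathbb{A}$. In particular, $\mathbb{H}^2$ primitively represents $2^a\mathbb{H}$ and $2^a\mathbb{A}$ for every integer $a\ge 0$. Hence, for every $n\ge1$, $\mathbb{H}^n$ primitively represents all even $R$-lattices of rank $n$.
   Context: An $R$-lattice is a finitely generated $R$-submodule of a quadratic space $(V,B)$ over $F$ with $Q(v)=B(v,v)$, assumed integral ($B(L,L)\subseteq R$) and nondegenerate; it is even if $Q(L)\subseteq 2R$, and isotropic if $Q(v)=0$ for some nonzero $v\in L$. $L$ primitively represents $\alpha\in R$ if $\alpha=Q(v)$ for a primitive vector $v$ (one with $Rv$ a direct summand). A representation is an $R$-linear map preserving $B$, primitive if its image is a direct summand. Fix $\rho\in R^\times$ such that $\Delta=1-4\rho$ is a nonsquare unit. For $\alpha\in R$, $\alpha\mathbb{H}$ and $\alpha\mathbb{A}$ are the binary lattices with Gram matrices $\begin{pmatrix}0&\alpha\\\alpha&0\end{pmatrix}$ and $\begin{pmatrix}2\alpha&\alpha\\\alpha&2\rho\alpha\end{pmatrix}$; $\mathbb{H}=1\mathbb{H}$, $\mathbb{A}=1\mathbb{A}$,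 and $\mathbb{H}^n$ is the orthogonal sum of $n$ copies of $\mathbb{H}$. *)

theory Defs
  imports "Jordan_Normal_Form.Determinant"
begin

text \<open>The base ring R: ring of integers of a nonarchimedean local field of characteristic
  not 2 in which 2 is a prime element. Characterised intrinsically: a domain in which 2 is a
  nonzero nonunit and every nonzero element is a unit times a power of 2 (a DVR with
  uniformizer 2), with finite residue field R/2R, complete for the 2-adic topology.\<close>
definition dyadic_local_int_ring :: "'a::idom itself \<Rightarrow> bool" where
  "dyadic_local_int_ring _ \<longleftrightarrow>
     (2::'a) \<noteq> 0 \<and> \<not> (2::'a) dvd 1 \<and>
     (\<forall>x::'a. x \<noteq> 0 \<longrightarrow> (\<exists>u k. u dvd 1 \<and> x = u * 2 ^ k)) \<and>
     (\<exists>S::'a set. finite S \<and> (\<forall>x. \<exists>s\<in>S. 2 dvd (x - s))) \<and>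
     (\<forall>f::nat \<Rightarrow> 'a. (\<forall>n. 2 ^ n dvd (f (Suc n) - f n)) \<longrightarrow>
        (\<exists>x. \<forall>n. 2 ^ n dvd (x - f n)))"

text \<open>An R-lattice of rank n, given by its Gram matrix w.r.t. a basis (R is a PID, so
  lattices are free): symmetric, integral (entries in R), nondegenerate.\<close>
definition lattice :: "nat \<Rightarrow> 'a::comm_ring_1 mat \<Rightarrow> bool" where
  "lattice n G \<longleftrightarrow> G \<in> carrier_mat n n \<and> transpose_mat G = G \<and> det G \<noteq> 0"

definition Qf :: "'a::comm_ring_1 mat \<Rightarrow> 'a vec \<Rightarrow> 'a" where
  "Qf G v = v \<bullet> (G *\<^sub>v v)"

definition even_lattice :: "nat \<Rightarrow> 'a::comm_ring_1 mat \<Rightarrow> bool" where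
  "even_lattice n G \<longleftrightarrow> lattice n G \<and> (\<forall>v\<in>carrier_vec n. (2::'a) dvd Qf G v)"

definition isotropic :: "nat \<Rightarrow> 'a::comm_ring_1 mat \<Rightarrow> bool" where
  "isotropic n G \<longleftrightarrow> (\<exists>v\<in>carrier_vec n. v \<noteq> 0\<^sub>v n \<and> Qf G v = 0)"

definition submod :: "nat \<Rightarrow> 'a::comm_ring_1 vec set \<Rightarrow> bool" where
  "submod n S \<longleftrightarrow> S \<subseteq> carrier_vec n \<and> 0\<^sub>v n \<in> S \<and>
     (\<forall>x\<in>S. \<forall>y\<in>S. x + y \<in> S) \<and> (\<forall>c. \<forall>x\<in>S. c \<cdot>\<^sub>v x \<in> S)"

definition direct_summand :: "nat \<Rightarrow> 'a::comm_ring_1 vec set \<Rightarrow> bool" where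
  "direct_summand n S \<longleftrightarrow> submod n S \<and>
     (\<exists>W. submod n W \<and> S \<inter> W = {0\<^sub>v n} \<and>
          (\<forall>x\<in>carrier_vec n. \<exists>s\<in>S. \<exists>w\<in>W. x = s + w))"

definition primitive_vec :: "nat \<Rightarrow> 'a::comm_ring_1 vec \<Rightarrow> bool" where
  "primitive_vec n v \<longleftrightarrow> v \<in> carrier_vec n \<and> v \<noteq> 0\<^sub>v n \<and>
     direct_summand n {c \<cdot>\<^sub>v v | c. True}"

definition prim_represents_elem :: "nat \<Rightarrow> 'a::comm_ring_1 mat \<Rightarrow> 'a \<Rightarrow> bool" where
  "prim_represents_elem n G \<alpha> \<longleftrightarrow> (\<exists>v. primitive_vec n v \<and> Qf G v = \<alpha>)"

text \<open>A representation of the rank-m lattice with Gram matrix A by the rank-n lattice with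
  Gram matrix G is an R-linear map R^m \<rightarrow> R^n (an n\<times>m matrix X) preserving B; it is
  primitive if its image is a direct summand.\<close>
definition represents_by :: "nat \<Rightarrow> 'a::comm_ring_1 mat \<Rightarrow> nat \<Rightarrow> 'a mat \<Rightarrow> 'a mat \<Rightarrow> bool" where
  "represents_by n G m A X \<longleftrightarrow> X \<in> carrier_mat n m \<and> transpose_mat X * G * X = A"

definition prim_represents :: "nat \<Rightarrow> 'a::comm_ring_1 mat \<Rightarrow> nat \<Rightarrow> 'a mat \<Rightarrow> bool" where
  "prim_represents n G m A \<longleftrightarrow>
     (\<exists>X. represents_by n G m A X \<and> direct_summand n {X *\<^sub>v u | u. u \<in> carrier_vec m})"

definition orth_sum :: "'a::zero mat \<Rightarrow> 'a mat \<Rightarrow> 'a mat" where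
  "orth_sum A B = four_block_mat A (0\<^sub>m (dim_row A) (dim_col B)) (0\<^sub>m (dim_row B) (dim_col A)) B"

definition hypH :: "'a::comm_ring_1 \<Rightarrow> 'a mat" where
  "hypH \<alpha> = mat 2 2 (\<lambda>(i,j). if i = j then 0 else \<alpha>)"

definition anisoA :: "'a::comm_ring_1 \<Rightarrow> 'a \<Rightarrow> 'a mat" where
  "anisoA \<rho> \<alpha> = mat 2 2 (\<lambda>(i,j). if i = 0 \<and> j = 0 then 2 * \<alpha>
                                else if i = 1 \<and> j = 1 then 2 * \<rho> * \<alpha> else \<alpha>)"

fun hypH_pow :: "nat \<Rightarrow> 'a::comm_ring_1 mat" where
  "hypH_pow 0 = 0\<^sub>m 0 0"
| "hypH_pow (Suc n) = orth_sum (hypH 1) (hypH_pow n)"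

end

theory Submission
  imports Defs
begin


lemma R_two: assumes "dyadic_local_int_ring TYPE('a::idom)"
  shows "(2::'a) \<noteq> 0" "\<not> (2::'a) dvd 1"
    "\<And>x::'a. x \<noteq> 0 \<Longrightarrow> \<exists>u k. u dvd 1 \<and> x = u * 2 ^ k"
    "\<exists>S::'a set. finite S \<and> (\<forall>x. \<exists>s\<in>S. 2 dvd (x - s))"
    "\<And>f::nat \<Rightarrow> 'a. (\<forall>n. 2 ^ n dvd (f (Suc n) - f n)) \<Longrightarrow> \<exists>x. \<forall>n. 2 ^ n dvd (x - f n)"
  using assms unfolding dyadic_local_int_ring_def by blast+

lemma unit_plus2: assumes R: "dyadic_local_int_ring TYPE('a::idom)"
  and u: "(u::'a) dvd 1" shows "(u + 2 * x) dvd 1"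
proof -
  have n2: "\<not> (2::'a) dvd u" using u R_two(2)[OF R] dvd_trans by blast
  have "u + 2 * x \<noteq> 0"
  proof
    assume "u + 2 * x = 0" then have "u = 2 * (- x)" by (simp add: eq_neg_iff_add_eq_0 add.commute)
    with n2 show False by simp
  qed
  then obtain v k where v: "v dvd 1" "u + 2 * x = v * 2 ^ k" using R_two(3)[OF R] by blast
  show ?thesis
  proof (cases k)
    case 0 then show ?thesis using v by simp
  next
    case (Suc k')
    have "u = v * 2 ^ k - 2 * x" using v(2) by (simp add: eq_diff_eq)
    then have "u = 2 * (v * 2 ^ k' - x)" using Suc by (simp add: right_diff_distrib ac_simps)
    with n2 show ?thesis by simp
  qed
qed

lemma two_prime: assumes R: "dyadic_local_int_ring TYPE('a::idom)"
  and d: "(2::'a) dvd z ^ 2" shows "2 dvd z"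
proof (cases "z = 0")
  case False
  then obtain v k where v: "v dvd 1" "z = v * 2 ^ k" using R_two(3)[OF R] by blast
  show ?thesis
  proof (cases k)
    case 0
    then have "z ^ 2 dvd 1" using v by (simp add: power2_eq_square)
    then show ?thesis using d R_two(2)[OF R] dvd_trans by blast
  next
    case (Suc k') then show ?thesis using v by simp
  qed
qed simp

lemma not_all_pow: assumes R: "dyadic_local_int_ring TYPE('a::idom)"
  and "\<forall>n. (2::'a) ^ n dvd x" shows "x = 0"
proof (rule ccontr)
  assume "x \<noteq> 0"
  then obtain v k where v: "v dvd 1" "x = v * 2 ^ k" using R_two(3)[OF R] by blast
  obtain c where "x = 2 ^ Suc k * c" using assms(2) by blast
  then have "2 ^ k * v = 2 ^ k * (2 * c)" using v by (simp add: ac_simps)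
  then have "v = 2 * c" using R_two(1)[OF R] by simp
  then show False using v(1) R_two(2)[OF R] by (metis dvd_mult_left)
qed




lemma dvd2_trans: "(2::'a::comm_ring_1) dvd (x - y) \<Longrightarrow> 2 dvd (y - z) \<Longrightarrow> 2 dvd (x - z)"
  by (metis diff_add_cancel add_diff_eq dvd_add)

lemma frob: assumes R: "dyadic_local_int_ring TYPE('a::idom)"
  shows "\<exists>y. (2::'a) dvd (x - y ^ 2)"
proof -
  define cls where "cls = (\<lambda>x::'a. {y. (2::'a) dvd (y - x)})"
  have cls_eq: "cls a = cls b \<longleftrightarrow> 2 dvd (a - b)" for a b
  proof
    assume "cls a = cls b"
    then have "a \<in> cls b" unfolding cls_def by auto
    then show "2 dvd (a - b)" unfolding cls_def by auto
  next
    assume h: "2 dvd (a - b)"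
    have h': "2 dvd (b - a)" using h by (metis dvd_minus_iff minus_diff_eq)
    show "cls a = cls b" unfolding cls_def using h h' dvd2_trans by blast
  qed
  obtain S :: "'a set" where S: "finite S" "\<forall>x. \<exists>s\<in>S. 2 dvd (x - s)" using R_two(4)[OF R] by blast
  define C where "C = range cls"
  have "C = cls ` S"
    unfolding C_def using S(2) cls_eq by blast
  then have fC: "finite C" using S(1) by simp
  define g where "g = (\<lambda>c. cls ((SOME x. x \<in> c) ^ 2))"
  have g_cls: "g (cls a) = cls (a ^ 2)" for a
  proof -
    have "a \<in> cls a" unfolding cls_def by simp
    then have s: "(SOME x. x \<in> cls a) \<in> cls a" by (rule someI)
    define b where "b = (SOME x. x \<in> cls a)"
    have "2 dvd (b - a)" using s unfolding b_def cls_def by simp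
    then obtain c where c: "b - a = 2 * c" by blast
    have "b ^ 2 - a ^ 2 = 2 * (c * (b + a))" using c
      by (simp add: power2_eq_square algebra_simps)
    then have "2 dvd (b ^ 2 - a ^ 2)" by simp
    then show ?thesis unfolding g_def b_def[symmetric] using cls_eq by blast
  qed
  have inj: "inj_on g C"
  proof (rule inj_onI)
    fix c d assume "c \<in> C" "d \<in> C" "g c = g d"
    then obtain a b where ab: "c = cls a" "d = cls b" "cls (a ^ 2) = cls (b ^ 2)"
      unfolding C_def using g_cls by auto
    then have "2 dvd (a ^ 2 - b ^ 2)" using cls_eq by blast
    moreover have "(a - b) ^ 2 = (a ^ 2 - b ^ 2) - 2 * (b * (a - b))"
      by (simp add: power2_eq_square algebra_simps)
    ultimately have "2 dvd (a - b) ^ 2" by simp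
    then have "2 dvd (a - b)" using two_prime[OF R] by blast
    then show "c = d" using ab cls_eq by blast
  qed
  have sub: "g ` C \<subseteq> C" unfolding C_def using g_cls by auto
  have "g ` C = C" using endo_inj_surj[OF fC sub inj] .
  then have "cls x \<in> g ` C" unfolding C_def by auto
  then obtain y where "cls x = cls (y ^ 2)" unfolding C_def using g_cls by auto
  then show ?thesis using cls_eq by blast
qed




lemma hensel_step: assumes R: "dyadic_local_int_ring TYPE('a::idom)"
  and B: "(B::'a) dvd 1" and d: "2 ^ (n+1) dvd (A*p^2 + B*p + C)"
  shows "\<exists>p'. 2 ^ (n+2) dvd (A*p'^2 + B*p' + C) \<and> 2 ^ (n+1) dvd (p' - p)"
proof -
  obtain m where m: "A*p^2 + B*p + C = 2^(n+1) * m" using d by blast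
  have "(B + 2 * (A*p)) dvd 1" using unit_plus2[OF R B] .
  then obtain w where w: "1 = (B + 2*(A*p)) * w" by blast
  define dd where "dd = - m * w"
  define p' where "p' = p + 2^(n+1) * dd"
  have "A*p'^2 + B*p' + C = (A*p^2 + B*p + C) + 2^(n+1) * ((B + 2*(A*p)) * dd) + A*(2^(n+1)*dd)^2"
    unfolding p'_def by (simp add: power2_eq_square algebra_simps)
  also have "\<dots> = 2^(n+1) * m + 2^(n+1) * (- m * ((B + 2*(A*p)) * w)) + A*(2^(n+1)*dd)^2"
    unfolding m dd_def by (simp add: ac_simps)
  also have "\<dots> = A*(2^(n+1)*dd)^2" unfolding w[symmetric] by simp
  also have "\<dots> = 2^(n+2) * (A * 2^n * dd^2)" by (simp add: power2_eq_square power_add algebra_simps)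
  finally have "2 ^ (n+2) dvd (A*p'^2 + B*p' + C)" by simp
  moreover have "2 ^ (n+1) dvd (p' - p)" unfolding p'_def by simp
  ultimately show ?thesis by blast
qed

lemma hensel: assumes R: "dyadic_local_int_ring TYPE('a::idom)"
  and B: "(B::'a) dvd 1" and d: "2 dvd (A*p0^2 + B*p0 + C)"
  shows "\<exists>x. A*x^2 + B*x + C = 0 \<and> 2 dvd (x - p0)"
proof -
  define f where "f = (\<lambda>x. A*x^2 + B*x + C)"
  define nxt where "nxt = (\<lambda>n p. SOME p'. 2 ^ (n+2) dvd f p' \<and> 2 ^ (n+1) dvd (p' - p))"
  define s where "s = rec_nat p0 nxt"
  have s0: "s 0 = p0" and sS: "s (Suc n) = nxt n (s n)" for n unfolding s_def by simp_all
  have inv: "2 ^ (n+1) dvd f (s n)" for n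
  proof (induction n)
    case 0 then show ?case using d s0 unfolding f_def by simp
  next
    case (Suc n)
    have "\<exists>p'. 2 ^ (n+2) dvd f p' \<and> 2 ^ (n+1) dvd (p' - s n)"
      using hensel_step[OF R B Suc[unfolded f_def]] unfolding f_def .
    then have "2 ^ (n+2) dvd f (s (Suc n)) \<and> 2 ^ (n+1) dvd (s (Suc n) - s n)"
      unfolding sS nxt_def by (rule someI_ex)
    then show ?case by simp
  qed
  have stp: "2 ^ (n+1) dvd (s (Suc n) - s n)" for n
  proof -
    have "\<exists>p'. 2 ^ (n+2) dvd f p' \<and> 2 ^ (n+1) dvd (p' - s n)"
      using hensel_step[OF R B inv[of n, unfolded f_def]] unfolding f_def .
    then have "2 ^ (n+2) dvd f (s (Suc n)) \<and> 2 ^ (n+1) dvd (s (Suc n) - s n)"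
      unfolding sS nxt_def by (rule someI_ex)
    then show ?thesis by simp
  qed
  have "\<forall>n. 2 ^ n dvd (s (Suc n) - s n)"
    using stp by (meson dvd_trans le_add1 le_imp_power_dvd)
  then obtain x where x: "\<forall>n. 2 ^ n dvd (x - s n)" using R_two(5)[OF R] by blast
  have "2 ^ n dvd f x" for n
  proof -
    have e: "f x = f (s n) + (x - s n) * (A * (x + s n) + B)"
      unfolding f_def by (simp add: power2_eq_square algebra_simps)
    have "2 ^ n dvd f (s n)" using inv[of n] by (meson dvd_trans le_add1 le_imp_power_dvd)
    then show ?thesis unfolding e using x by simp
  qed
  then have "f x = 0" using not_all_pow[OF R] by blast
  moreover have "2 dvd (x - p0)"
  proof -
    have "2 dvd (x - s 1)" using x[rule_format, of 1] by simp
    moreover have "2 dvd (s 1 - s 0)" using stp[of 0] by simp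
    ultimately show ?thesis using s0 dvd2_trans by metis
  qed
  ultimately show ?thesis unfolding f_def by blast
qed




lemma mmv_smult: "(A::'a::comm_ring_1 mat) \<in> carrier_mat nr nc \<Longrightarrow> v \<in> carrier_vec nc \<Longrightarrow>
  A *\<^sub>v (k \<cdot>\<^sub>v v) = k \<cdot>\<^sub>v (A *\<^sub>v v)"
  by (intro eq_vecI) auto

lemma mmv_zero: "(A::'a::comm_ring_1 mat) \<in> carrier_mat nr nc \<Longrightarrow> A *\<^sub>v 0\<^sub>v nc = 0\<^sub>v nr"
  by (intro eq_vecI) auto

lemma ds_left_inv:
  fixes X :: "'a::comm_ring_1 mat"
  assumes X: "X \<in> carrier_mat n m" and L: "L \<in> carrier_mat m n" and LX: "L * X = 1\<^sub>m m"
  shows "direct_summand n {X *\<^sub>v u | u. u \<in> carrier_vec m}"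
proof -
  let ?S = "{X *\<^sub>v u | u. u \<in> carrier_vec m}"
  define W where "W = {x \<in> carrier_vec n. L *\<^sub>v x = 0\<^sub>v m}"
  have LXu: "L *\<^sub>v (X *\<^sub>v u) = u" if "u \<in> carrier_vec m" for u
    using that X L LX by (metis assoc_mult_mat_vec one_mult_mat_vec)
  have subS: "submod n ?S" unfolding submod_def
  proof (intro conjI ballI allI)
    show "?S \<subseteq> carrier_vec n" using X by auto
    show "0\<^sub>v n \<in> ?S" using X by (auto intro!: exI[of _ "0\<^sub>v m"] simp: mmv_zero)
  next
    fix x y assume "x \<in> ?S" "y \<in> ?S"
    then obtain u w where "x = X *\<^sub>v u" "y = X *\<^sub>v w" "u \<in> carrier_vec m" "w \<in> carrier_vec m" by blast
    then show "x + y \<in> ?S" using X by (auto intro!: exI[of _ "u + w"] simp: mult_add_distrib_mat_vec)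
  next
    fix c x assume "x \<in> ?S"
    then obtain u where "x = X *\<^sub>v u" "u \<in> carrier_vec m" by blast
    then show "c \<cdot>\<^sub>v x \<in> ?S" using X by (auto intro!: exI[of _ "c \<cdot>\<^sub>v u"] simp: mmv_smult)
  qed
  have subW: "submod n W" unfolding submod_def W_def
  proof (intro conjI ballI allI)
    show "0\<^sub>v n \<in> {x \<in> carrier_vec n. L *\<^sub>v x = 0\<^sub>v m}" using L by (simp add: mmv_zero)
  next
    fix x y assume "x \<in> {x \<in> carrier_vec n. L *\<^sub>v x = 0\<^sub>v m}" "y \<in> {x \<in> carrier_vec n. L *\<^sub>v x = 0\<^sub>v m}"
    then show "x + y \<in> {x \<in> carrier_vec n. L *\<^sub>v x = 0\<^sub>v m}" using L by (auto simp: mult_add_distrib_mat_vec)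
  next
    fix c x assume "x \<in> {x \<in> carrier_vec n. L *\<^sub>v x = 0\<^sub>v m}"
    then show "c \<cdot>\<^sub>v x \<in> {x \<in> carrier_vec n. L *\<^sub>v x = 0\<^sub>v m}" using L by (auto simp: mmv_smult)
  qed auto
  have int: "?S \<inter> W = {0\<^sub>v n}"
  proof
    show "{0\<^sub>v n} \<subseteq> ?S \<inter> W" using subS subW unfolding submod_def by blast
    show "?S \<inter> W \<subseteq> {0\<^sub>v n}"
    proof
      fix x assume "x \<in> ?S \<inter> W"
      then obtain u where u: "x = X *\<^sub>v u" "u \<in> carrier_vec m" "L *\<^sub>v x = 0\<^sub>v m" unfolding W_def by blast
      then have "u = 0\<^sub>v m" using LXu by simp
      then show "x \<in> {0\<^sub>v n}" using u X by (simp add: mmv_zero)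
    qed
  qed
  have dec: "\<exists>s\<in>?S. \<exists>w\<in>W. x = s + w" if x: "x \<in> carrier_vec n" for x
  proof -
    let ?u = "L *\<^sub>v x"
    have u: "?u \<in> carrier_vec m" using L x by simp
    have Xu: "X *\<^sub>v ?u \<in> carrier_vec n" using X u by simp
    have "L *\<^sub>v (x - X *\<^sub>v ?u) = ?u - L *\<^sub>v (X *\<^sub>v ?u)"
      using L x Xu by (simp add: mult_minus_distrib_mat_vec)
    also have "\<dots> = 0\<^sub>v m" using LXu[OF u] u by simp
    finally have "x - X *\<^sub>v ?u \<in> W" unfolding W_def using x Xu X by simp
    moreover have "x = X *\<^sub>v ?u + (x - X *\<^sub>v ?u)" using x Xu X by (intro eq_vecI) auto
    ultimately show ?thesis using u by blast
  qed
  show ?thesis unfolding direct_summand_def using subS subW int dec by blast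
qed




lemma prim_rep_gen:
  fixes X :: "'a::comm_ring_1 mat"
  assumes X: "X \<in> carrier_mat n m" and L: "L \<in> carrier_mat m n" and LX: "L * X = 1\<^sub>m m"
    and A: "transpose_mat X * G * X = A"
  shows "prim_represents n G m A"
  unfolding prim_represents_def represents_by_def using ds_left_inv[OF X L LX] X A by blast

lemma prim_vec_of_fun:
  fixes v :: "'a::comm_ring_1 vec"
  assumes v: "v \<in> carrier_vec n" and p: "p \<in> carrier_vec n" and pv: "p \<bullet> v = 1"
  shows "primitive_vec n v"
proof -
  let ?X = "mat_of_cols n [v]"
  let ?L = "mat_of_rows n [p]"
  have X: "?X \<in> carrier_mat n 1" using mat_of_cols_carrier(1)[of n "[v]"] by simp
  have L: "?L \<in> carrier_mat 1 n" using mat_of_rows_carrier(1)[of n "[p]"] by simp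
  have LX: "?L * ?X = 1\<^sub>m 1"
  proof (rule eq_matI)
    fix i j assume "i < dim_row (1\<^sub>m 1 :: 'a mat)" "j < dim_col (1\<^sub>m 1 :: 'a mat)"
    then have ij: "i = 0" "j = 0" by auto
    have "(?L * ?X) $$ (0, 0) = row ?L 0 \<bullet> col ?X 0" using X L by simp
    also have "\<dots> = p \<bullet> v" using p v by simp
    finally show "(?L * ?X) $$ (i, j) = 1\<^sub>m 1 $$ (i, j)" using ij pv by simp
  qed (use X L in auto)
  have S: "{?X *\<^sub>v u | u. u \<in> carrier_vec 1} = {c \<cdot>\<^sub>v v | c. True}"
  proof -
    have e: "?X *\<^sub>v u = (u $ 0) \<cdot>\<^sub>v v" if "u \<in> carrier_vec 1" for u
    proof (rule eq_vecI)
      fix i assume "i < dim_vec ((u $ 0) \<cdot>\<^sub>v v)"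
      then have i: "i < n" using v by simp
      have "(?X *\<^sub>v u) $ i = row ?X i \<bullet> u" using i X by simp
      also have "\<dots> = (\<Sum>j\<in>{0..<1}. row ?X i $ j * u $ j)" using that by (simp add: scalar_prod_def)
      also have "\<dots> = v $ i * u $ 0" using i by (simp add: mat_of_cols_def row_def)
      finally show "(?X *\<^sub>v u) $ i = ((u $ 0) \<cdot>\<^sub>v v) $ i" using i v by (simp add: mult.commute)
    qed (use X v in simp)
    have e2: "c \<cdot>\<^sub>v v = ?X *\<^sub>v vec 1 (\<lambda>_. c)" for c
    proof -
      have "vec 1 (\<lambda>_. c) \<in> carrier_vec 1" by simp
      from e[OF this] show ?thesis by simp
    qed
    show ?thesis
    proof (intro equalityI subsetI)
      fix x assume "x \<in> {?X *\<^sub>v u | u. u \<in> carrier_vec 1}"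
      then obtain u where "u \<in> carrier_vec 1" "x = ?X *\<^sub>v u" by blast
      then have "x = (u $ 0) \<cdot>\<^sub>v v" using e by blast
      then show "x \<in> {c \<cdot>\<^sub>v v | c. True}" by blast
    next
      fix x assume "x \<in> {c \<cdot>\<^sub>v v | c. True}"
      then obtain c where "x = c \<cdot>\<^sub>v v" by blast
      then have "x = ?X *\<^sub>v vec 1 (\<lambda>_. c)" using e2 by blast
      moreover have "vec 1 (\<lambda>_. c) \<in> carrier_vec 1" by simp
      ultimately show "x \<in> {?X *\<^sub>v u | u. u \<in> carrier_vec 1}" by blast
    qed
  qed
  have "v \<noteq> 0\<^sub>v n"
  proof
    assume "v = 0\<^sub>v n" then have "p \<bullet> v = 0" using p by simp
    then show False using pv by simp
  qed
  then show ?thesis unfolding primitive_vec_def using ds_left_inv[OF X L LX] S v by simp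
qed




definition mkv :: "nat \<Rightarrow> 'a \<Rightarrow> 'a \<Rightarrow> 'a vec \<Rightarrow> 'a vec" where
  "mkv k a b w = vec (2+k) (\<lambda>i. if i = 0 then a else if i = 1 then b else w $ (i - 2))"

lemma mkv_carrier[simp]: "mkv k a b w \<in> carrier_vec (2+k)" "dim_vec (mkv k a b w) = 2 + k"
  unfolding mkv_def by auto

lemma sum_split2: fixes k :: nat and f :: "nat \<Rightarrow> 'a::comm_monoid_add" shows "(\<Sum>i\<in>{0..<2+k}. f i) = f 0 + f 1 + (\<Sum>i\<in>{0..<k}. f (i+2))"
proof -
  have "(\<Sum>i\<in>{0..<Suc (Suc k)}. f i) = f 0 + (f 1 + (\<Sum>i\<in>{0..<k}. f (Suc (Suc i))))"
    by (simp only: sum.atLeast0_lessThan_Suc_shift comp_def One_nat_def)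
  then show ?thesis by (simp add: add.assoc)
qed

lemma mkv_sp: assumes "w \<in> carrier_vec k" "u \<in> carrier_vec k"
  shows "mkv k a b w \<bullet> mkv k c d u = a * c + b * d + w \<bullet> u"
proof -
  have "mkv k a b w \<bullet> mkv k c d u = (\<Sum>i\<in>{0..<2+k}. mkv k a b w $ i * mkv k c d u $ i)"
    unfolding scalar_prod_def by simp
  also have "\<dots> = a * c + b * d + (\<Sum>i\<in>{0..<k}. w $ i * u $ i)"
    unfolding sum_split2 by (simp add: mkv_def)
  finally show ?thesis using assms unfolding scalar_prod_def by simp
qed

lemma hypH_idx: "i < 2 \<Longrightarrow> j < 2 \<Longrightarrow> hypH c $$ (i,j) = (if i = j then 0 else c)"
  "hypH c \<in> carrier_mat 2 2" "dim_row (hypH c) = 2" "dim_col (hypH c) = 2"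
  unfolding hypH_def by auto

lemma anisoA_idx: "anisoA r c \<in> carrier_mat 2 2"
  "anisoA r c $$ (0,0) = 2 * c" "anisoA r c $$ (0,1) = c" "anisoA r c $$ (1,0) = c"
  "anisoA r c $$ (1,1) = 2 * r * c"
  unfolding anisoA_def by auto

lemma orth_carrier: "J \<in> carrier_mat k k \<Longrightarrow> orth_sum (hypH 1) J \<in> carrier_mat (2+k) (2+k)"
  unfolding orth_sum_def using hypH_idx(2) by (intro four_block_carrier_mat) auto

lemma orth_row: assumes J: "(J::'a::comm_ring_1 mat) \<in> carrier_mat k k" and i: "i < 2 + k"
  shows "row (orth_sum (hypH 1) J) i =
    mkv k (if i = 1 then 1 else 0) (if i = 0 then 1 else 0) (if i < 2 then 0\<^sub>v k else row J (i - 2))"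
proof (rule eq_vecI)
  have dims: "dim_row (orth_sum (hypH 1) J) = 2 + k" "dim_col (orth_sum (hypH 1) J) = 2 + k"
    using orth_carrier[OF J] by auto
  show "dim_vec (row (orth_sum (hypH 1) J) i) = dim_vec (mkv k (if i = 1 then 1 else 0) (if i = 0 then 1 else 0) (if i < 2 then 0\<^sub>v k else row J (i - 2)))"
    using dims by simp
  fix j assume "j < dim_vec (mkv k (if i = 1 then 1 else 0) (if i = 0 then 1 else 0) (if i < 2 then 0\<^sub>v k else row J (i - 2)))"
  then have j: "j < 2 + k" by simp
  have e: "orth_sum (hypH 1) J $$ (i, j) = (if i < 2 then if j < 2 then hypH 1 $$ (i,j) else 0
       else if j < 2 then 0 else J $$ (i - 2, j - 2))"
    unfolding orth_sum_def using i j J by (simp add: hypH_idx(3,4))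
  show "row (orth_sum (hypH 1) J) i $ j = mkv k (if i = 1 then 1 else 0) (if i = 0 then 1 else 0) (if i < 2 then 0\<^sub>v k else row J (i - 2)) $ j"
    using i j J dims e by (auto simp: mkv_def hypH_idx(1))
qed

lemma orth_mult: assumes J: "(J::'a::comm_ring_1 mat) \<in> carrier_mat k k" and w: "w \<in> carrier_vec k"
  shows "orth_sum (hypH 1) J *\<^sub>v mkv k a b w = mkv k b a (J *\<^sub>v w)"
proof (rule eq_vecI)
  have dims: "dim_row (orth_sum (hypH 1) J) = 2 + k"
    using orth_carrier[OF J] by auto
  show "dim_vec (orth_sum (hypH 1) J *\<^sub>v mkv k a b w) = dim_vec (mkv k b a (J *\<^sub>v w))" using dims by simp
  fix i assume "i < dim_vec (mkv k b a (J *\<^sub>v w))"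
  then have i: "i < 2 + k" by simp
  have "(orth_sum (hypH 1) J *\<^sub>v mkv k a b w) $ i = row (orth_sum (hypH 1) J) i \<bullet> mkv k a b w"
    using dims i by simp
  also have "\<dots> = (if i = 1 then 1 else 0) * a + (if i = 0 then 1 else 0) * b + (if i < 2 then 0\<^sub>v k else row J (i - 2)) \<bullet> w"
    unfolding orth_row[OF J i] using J w by (intro mkv_sp) auto
  also have "\<dots> = mkv k b a (J *\<^sub>v w) $ i"
    using i J w by (auto simp: mkv_def)
  finally show "(orth_sum (hypH 1) J *\<^sub>v mkv k a b w) $ i = mkv k b a (J *\<^sub>v w) $ i" .
qed

lemma prim2:
  fixes G :: "'a::comm_ring_1 mat"
  assumes G: "G \<in> carrier_mat N N" and x: "x1 \<in> carrier_vec N" "x2 \<in> carrier_vec N"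
    and l: "l1 \<in> carrier_vec N" "l2 \<in> carrier_vec N"
    and li: "l1 \<bullet> x1 = 1" "l1 \<bullet> x2 = 0" "l2 \<bullet> x1 = 0" "l2 \<bullet> x2 = 1"
    and A: "A \<in> carrier_mat 2 2"
    and g: "x1 \<bullet> (G *\<^sub>v x1) = A $$ (0,0)" "x1 \<bullet> (G *\<^sub>v x2) = A $$ (0,1)"
      "x2 \<bullet> (G *\<^sub>v x1) = A $$ (1,0)" "x2 \<bullet> (G *\<^sub>v x2) = A $$ (1,1)"
  shows "prim_represents N G 2 A"
proof -
  let ?X = "mat_of_cols N [x1, x2]"
  let ?L = "mat_of_rows N [l1, l2]"
  have X: "?X \<in> carrier_mat N 2" using mat_of_cols_carrier(1)[of N "[x1,x2]"] by (simp add: numeral_2_eq_2)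
  have L: "?L \<in> carrier_mat 2 N" using mat_of_rows_carrier(1)[of N "[l1,l2]"] by (simp add: numeral_2_eq_2)
  have cX: "col ?X j = [x1, x2] ! j" if "j < 2" for j
    using that x by (intro col_mat_of_cols) (auto simp: less_2_cases_iff)
  have rL: "row ?L j = [l1, l2] ! j" if "j < 2" for j
    using that l by (intro mat_of_rows_row) (auto simp: less_2_cases_iff)
  have LX: "?L * ?X = 1\<^sub>m 2"
  proof (rule eq_matI)
    fix i j assume "i < dim_row (1\<^sub>m 2 :: 'a mat)" "j < dim_col (1\<^sub>m 2 :: 'a mat)"
    then have ij: "i < 2" "j < 2" by auto
    have "(?L * ?X) $$ (i, j) = row ?L i \<bullet> col ?X j" using X L ij by simp
    also have "\<dots> = [l1, l2] ! i \<bullet> [x1, x2] ! j" using ij cX rL by simp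
    finally show "(?L * ?X) $$ (i, j) = 1\<^sub>m 2 $$ (i, j)" using ij li
      by (auto simp: less_2_cases_iff)
  qed (use X L in auto)
  have XG: "transpose_mat ?X * G * ?X = A"
  proof (rule eq_matI)
    fix i j assume "i < dim_row A" "j < dim_col A"
    then have ij: "i < 2" "j < 2" using A by auto
    have "(transpose_mat ?X * G * ?X) $$ (i, j) = row (transpose_mat ?X * G) i \<bullet> col ?X j"
      by (rule index_mult_mat(1)) (use X G ij in auto)
    also have "row (transpose_mat ?X * G) i = transpose_mat G *\<^sub>v col ?X i"
    proof -
      have "row (transpose_mat ?X * G) i = col (transpose_mat (transpose_mat ?X * G)) i"
        using X G ij by (subst col_transpose) auto
      also have "transpose_mat (transpose_mat ?X * G) = transpose_mat G * ?X"
        using transpose_mult[of "transpose_mat ?X" 2 N G N] X G by simp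
      also have "col (transpose_mat G * ?X) i = transpose_mat G *\<^sub>v col ?X i"
        using G X ij by (intro col_mult2) auto
      finally show ?thesis .
    qed
    also have "(transpose_mat G *\<^sub>v col ?X i) \<bullet> col ?X j = col ?X i \<bullet> (G *\<^sub>v col ?X j)"
    proof (rule transpose_vec_mult_scalar[of G N N])
      show "col ?X i \<in> carrier_vec N" "col ?X j \<in> carrier_vec N" using X by (metis carrier_matD(1) col_dim)+
    qed (use G in auto)
    also have "\<dots> = A $$ (i, j)" using ij cX g by (auto simp: less_2_cases_iff)
    finally show "(transpose_mat ?X * G * ?X) $$ (i, j) = A $$ (i, j)" .
  qed (use X G A in auto)
  show ?thesis using prim_rep_gen[OF X L LX XG] .
qed




lemma fun_of_prim:
  fixes v :: "'a::idom vec"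
  assumes pv: "primitive_vec k v"
  shows "\<exists>p\<in>carrier_vec k. p \<bullet> v = 1"
proof -
  let ?S = "{c \<cdot>\<^sub>v v | c. True}"
  have v: "v \<in> carrier_vec k" "v \<noteq> 0\<^sub>v k" and ds: "direct_summand k ?S"
    using pv unfolding primitive_vec_def by auto
  obtain W where W: "submod k W" "?S \<inter> W = {0\<^sub>v k}"
    "\<forall>x\<in>carrier_vec k. \<exists>s\<in>?S. \<exists>w\<in>W. x = s + w"
    using ds unfolding direct_summand_def by blast
  have Wc: "W \<subseteq> carrier_vec k" and W0: "0\<^sub>v k \<in> W" and Wadd: "\<And>x y. x \<in> W \<Longrightarrow> y \<in> W \<Longrightarrow> x + y \<in> W"
    and Wsm: "\<And>c x. x \<in> W \<Longrightarrow> c \<cdot>\<^sub>v x \<in> W"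
    using W(1) unfolding submod_def by auto
  have "\<forall>i. \<exists>c. i < k \<longrightarrow> unit_vec k i - c \<cdot>\<^sub>v v \<in> W"
  proof (intro allI)
    fix i
    show "\<exists>c. i < k \<longrightarrow> unit_vec k i - c \<cdot>\<^sub>v v \<in> W"
    proof (cases "i < k")
      case True
      obtain s w where sw: "s \<in> ?S" "w \<in> W" "unit_vec k i = s + w" using W(3) unit_vec_carrier by blast
      obtain c where s: "s = c \<cdot>\<^sub>v v" using sw(1) by blast
      have "w \<in> carrier_vec k" using sw(2) Wc by blast
      then have "unit_vec k i - c \<cdot>\<^sub>v v = w" using sw(3) s v by (intro eq_vecI) auto
      then show ?thesis using sw(2) by blast
    qed simp
  qed
  then obtain c where c: "\<And>i. i < k \<Longrightarrow> unit_vec k i - c i \<cdot>\<^sub>v v \<in> W" by metis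
  have ind: "\<forall>x\<in>carrier_vec k. (\<forall>i. m \<le> i \<longrightarrow> i < k \<longrightarrow> x $ i = 0) \<longrightarrow>
      x - (\<Sum>i<m. x $ i * c i) \<cdot>\<^sub>v v \<in> W" if "m \<le> k" for m
    using that
  proof (induction m)
    case 0
    show ?case
    proof (intro ballI impI)
      fix x :: "'a vec" assume x: "x \<in> carrier_vec k" "\<forall>i. 0 \<le> i \<longrightarrow> i < k \<longrightarrow> x $ i = 0"
      have "x - (\<Sum>i<0. x $ i * c i) \<cdot>\<^sub>v v = 0\<^sub>v k" using x v by (intro eq_vecI) auto
      then show "x - (\<Sum>i<0. x $ i * c i) \<cdot>\<^sub>v v \<in> W" using W0 by simp
    qed
  next
    case (Suc m)
    show ?case
    proof (intro ballI impI)
      fix x :: "'a vec" assume x: "x \<in> carrier_vec k" "\<forall>i. Suc m \<le> i \<longrightarrow> i < k \<longrightarrow> x $ i = 0"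
      define x' where "x' = vec k (\<lambda>i. if i = m then 0 else x $ i)"
      have x': "x' \<in> carrier_vec k" "\<forall>i. m \<le> i \<longrightarrow> i < k \<longrightarrow> x' $ i = 0"
        unfolding x'_def using x by auto
      have m: "m < k" using Suc.prems by simp
      have A: "x' - (\<Sum>i<m. x' $ i * c i) \<cdot>\<^sub>v v \<in> W" using Suc.IH m x' by simp
      have s: "(\<Sum>i<m. x' $ i * c i) = (\<Sum>i<m. x $ i * c i)"
        using m unfolding x'_def by (intro sum.cong) auto
      have B: "x $ m \<cdot>\<^sub>v (unit_vec k m - c m \<cdot>\<^sub>v v) \<in> W" using Wsm c m by blast
      have "x - (\<Sum>i<Suc m. x $ i * c i) \<cdot>\<^sub>v v =
          (x' - (\<Sum>i<m. x' $ i * c i) \<cdot>\<^sub>v v) + x $ m \<cdot>\<^sub>v (unit_vec k m - c m \<cdot>\<^sub>v v)"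
        unfolding s using x v m by (intro eq_vecI) (auto simp: x'_def algebra_simps)
      then show "x - (\<Sum>i<Suc m. x $ i * c i) \<cdot>\<^sub>v v \<in> W" using Wadd[OF A B] by simp
    qed
  qed
  have "v - (\<Sum>i<k. v $ i * c i) \<cdot>\<^sub>v v \<in> W" using ind[of k] v by simp
  moreover have "v - (\<Sum>i<k. v $ i * c i) \<cdot>\<^sub>v v = (1 - (\<Sum>i<k. v $ i * c i)) \<cdot>\<^sub>v v"
    using v by (intro eq_vecI) (auto simp: algebra_simps)
  ultimately have "(1 - (\<Sum>i<k. v $ i * c i)) \<cdot>\<^sub>v v \<in> W" by simp
  then have "(1 - (\<Sum>i<k. v $ i * c i)) \<cdot>\<^sub>v v \<in> ?S \<inter> W" by blast
  then have z: "(1 - (\<Sum>i<k. v $ i * c i)) \<cdot>\<^sub>v v = 0\<^sub>v k" using W(2) by blast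
  obtain j where j: "j < k" "v $ j \<noteq> 0" using v by (metis carrier_vecD eq_vecI index_zero_vec(1,2))
  have "(1 - (\<Sum>i<k. v $ i * c i)) * v $ j = 0" using arg_cong[OF z, of "\<lambda>x. x $ j"] j v by simp
  then have "(\<Sum>i<k. v $ i * c i) = 1" using j by simp
  moreover have "vec k c \<bullet> v = (\<Sum>i<k. v $ i * c i)"
    using v unfolding scalar_prod_def by (auto simp: atLeast0LessThan mult.commute intro: sum.cong)
  ultimately show ?thesis by (intro bexI[of _ "vec k c"]) auto
qed

lemma primitivize:
  fixes v :: "'a::idom vec"
  assumes R: "dyadic_local_int_ring TYPE('a)" and v: "v \<in> carrier_vec k" "v \<noteq> 0\<^sub>v k"
  shows "\<exists>m w j. w \<in> carrier_vec k \<and> v = (2::'a) ^ m \<cdot>\<^sub>v w \<and> j < k \<and> w $ j dvd 1"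
proof -
  define K where "K = {e. \<exists>i<k. \<exists>u. u dvd 1 \<and> v $ i = u * (2::'a) ^ e}"
  obtain j where j: "j < k" "v $ j \<noteq> 0" using v by (metis carrier_vecD eq_vecI index_zero_vec(1,2))
  have "\<exists>e. e \<in> K" using R_two(3)[OF R j(2)] j(1) unfolding K_def by blast
  define m where "m = (LEAST e. e \<in> K)"
  have mK: "m \<in> K" unfolding m_def using \<open>\<exists>e. e \<in> K\<close> by (metis LeastI)
  then obtain j0 u0 where j0: "j0 < k" "u0 dvd 1" "v $ j0 = u0 * 2 ^ m" unfolding K_def by blast
  have dv: "\<exists>c. v $ i = 2 ^ m * c" if "i < k" for i
  proof (cases "v $ i = 0")
    case True then show ?thesis by simp
  next
    case False
    then obtain u e where ue: "u dvd 1" "v $ i = u * 2 ^ e" using R_two(3)[OF R] by blast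
    then have "e \<in> K" using that unfolding K_def by blast
    then have "m \<le> e" unfolding m_def by (rule Least_le)
    then have "v $ i = 2 ^ m * (u * 2 ^ (e - m))" using ue by (simp add: power_add[symmetric] ac_simps)
    then show ?thesis by blast
  qed
  define w where "w = vec k (\<lambda>i. SOME c. v $ i = 2 ^ m * c)"
  have wi: "v $ i = 2 ^ m * w $ i" if "i < k" for i
    unfolding w_def using that someI_ex[OF dv[OF that]] by simp
  have "w \<in> carrier_vec k" unfolding w_def by simp
  moreover have "v = 2 ^ m \<cdot>\<^sub>v w" using v wi unfolding w_def by (intro eq_vecI) auto
  moreover have "w $ j0 = u0" using wi[OF j0(1)] j0(3) R_two(1)[OF R] by (simp add: mult.commute)
  ultimately show ?thesis using j0 by blast
qed

lemma Qf_smult: "(J::'a::comm_ring_1 mat) \<in> carrier_mat k k \<Longrightarrow> w \<in> carrier_vec k \<Longrightarrow>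
  Qf J (c \<cdot>\<^sub>v w) = c * c * Qf J w"
  unfolding Qf_def by (simp add: mmv_smult)

lemma prim_iso:
  fixes J :: "'a::idom mat"
  assumes R: "dyadic_local_int_ring TYPE('a)" and J: "J \<in> carrier_mat k k" and iso: "isotropic k J"
  shows "\<exists>w\<in>carrier_vec k. \<exists>p\<in>carrier_vec k. p \<bullet> w = 1 \<and> Qf J w = 0"
proof -
  obtain v where v: "v \<in> carrier_vec k" "v \<noteq> 0\<^sub>v k" "Qf J v = 0" using iso unfolding isotropic_def by blast
  obtain m w j where mwj: "w \<in> carrier_vec k" "v = (2::'a) ^ m \<cdot>\<^sub>v w" "j < k" "w $ j dvd 1"
    using primitivize[OF R v(1,2)] by blast
  have "2 ^ m * 2 ^ m * Qf J w = 0" using v(3) mwj Qf_smult[OF J mwj(1)] by simp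
  then have Q: "Qf J w = 0" using R_two(1)[OF R] by simp
  obtain u where u: "1 = w $ j * u" using mwj(4) by blast
  have "(u \<cdot>\<^sub>v unit_vec k j) \<bullet> w = 1" using mwj u by (simp add: mult.commute)
  then show ?thesis using mwj(1) Q by (intro bexI[of _ w] bexI[of _ "u \<cdot>\<^sub>v unit_vec k j"]) auto
qed




lemma mkv_carrier2[simp]: "mkv k a b w \<in> carrier_vec (Suc (Suc k))"
  using mkv_carrier(1)[of k a b w] by simp

lemma part_a:
  fixes J :: "'a::comm_ring_1 mat"
  assumes J: "J \<in> carrier_mat k k" and w: "w \<in> carrier_vec k" and p: "p \<in> carrier_vec k"
    and pw: "p \<bullet> w = 1" and Q: "Qf J w = 0"
  shows "prim_represents (2+k) (orth_sum (hypH 1) J) 2 (hypH (2^a))"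
proof -
  have Jw: "J *\<^sub>v w \<in> carrier_vec k" using J w by simp
  have z: "0\<^sub>v k \<in> carrier_vec k" by simp
  have Q': "w \<bullet> (J *\<^sub>v w) = 0" using Q unfolding Qf_def .
  show ?thesis
  proof (rule prim2[OF orth_carrier[OF J], of "mkv k 1 0 (0\<^sub>v k)" "mkv k 0 (2^a) w" "mkv k 1 0 (0\<^sub>v k)" "mkv k 0 0 p"])
  qed (simp_all add: orth_mult[OF J] mkv_sp[OF z z] mkv_sp[OF z w] mkv_sp[OF w z] mkv_sp[OF p z] mkv_sp[OF p w]
        mkv_sp[OF w Jw] mkv_sp[OF z Jw] mmv_zero[OF J] hypH_idx Q' pw w p Jw)
qed

lemma part_bH:
  fixes J :: "'a::comm_ring_1 mat"
  assumes J: "J \<in> carrier_mat k k" and v: "v \<in> carrier_vec k" and p: "p \<in> carrier_vec k"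
    and pv: "p \<bullet> v = 1" and Q: "Qf J v = 2^(a+1) * e" and e: "e * e' = 1"
  shows "prim_represents (2+k) (orth_sum (hypH 1) J) 2 (hypH (2^a))"
proof -
  have Jv: "J *\<^sub>v v \<in> carrier_vec k" using J v by simp
  have z: "0\<^sub>v k \<in> carrier_vec k" by simp
  have ep: "e \<cdot>\<^sub>v p \<in> carrier_vec k" using p by simp
  have Q': "v \<bullet> (J *\<^sub>v v) = 2^(a+1) * e" using Q unfolding Qf_def .
  have e2: "e * (e' * x) = x" for x using e by (metis mult.assoc mult_1)
  have epv: "(e \<cdot>\<^sub>v p) \<bullet> v = e" using p v pv by simp
  show ?thesis
  proof (rule prim2[OF orth_carrier[OF J], of "mkv k 1 (-(2^a*e)) v" "mkv k (-e') 0 (0\<^sub>v k)"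
        "mkv k 0 0 p" "mkv k (-e) 0 (e \<cdot>\<^sub>v p)"])
  qed (simp_all add: orth_mult[OF J] mkv_sp[OF z z] mkv_sp[OF z v] mkv_sp[OF v z] mkv_sp[OF p z] mkv_sp[OF p v]
        mkv_sp[OF v Jv] mkv_sp[OF z Jv] mkv_sp[OF ep v] mkv_sp[OF ep z] mmv_zero[OF J] hypH_idx Q' pv epv v p ep Jv e2,
       simp_all add: algebra_simps e e2)
qed




lemma part_bA:
  fixes J :: "'a::comm_ring_1 mat"
  assumes J: "J \<in> carrier_mat k k" and v: "v \<in> carrier_vec k" and p: "p \<in> carrier_vec k"
    and pv: "p \<bullet> v = 1" and Q: "Qf J v = 2^(a+1) * e"
    and eq: "(1-e)*r^2 - (1-2*e*t)*r + (\<rho> - e*t^2) = 0" and D: "D * (t - r) = 1"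
  shows "prim_represents (2+k) (orth_sum (hypH 1) J) 2 (anisoA \<rho> (2^a))"
proof -
  have D': "D * t = 1 + D * r" using D by (simp add: algebra_simps)
  have D'': "D * (r * t) = r + D * (r * r)"
  proof -
    have "D * (r * t) = r * (D * t)" by (simp add: ac_simps)
    also have "\<dots> = r + D * (r * r)" unfolding D' by (simp add: algebra_simps)
    finally show ?thesis .
  qed
  define q where "q = 1 - (1-e)*r - 2*e*t"
  have rho: "\<rho> = r*q + e*t^2"
  proof -
    have "r*q + e*t^2 - \<rho> = -((1-e)*r^2 - (1-2*e*t)*r + (\<rho> - e*t^2))"
      unfolding q_def by (simp add: algebra_simps power2_eq_square)
    then show ?thesis using eq by simp
  qed
  have Jv: "J *\<^sub>v v \<in> carrier_vec k" using J v by simp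
  have tv: "t \<cdot>\<^sub>v v \<in> carrier_vec k" using v by simp
  have tJv: "t \<cdot>\<^sub>v (J *\<^sub>v v) \<in> carrier_vec k" using Jv by simp
  have Dp: "(D * t) \<cdot>\<^sub>v p \<in> carrier_vec k" "(- (D * r)) \<cdot>\<^sub>v p \<in> carrier_vec k" "D \<cdot>\<^sub>v p \<in> carrier_vec k"
    using p by auto
  have Q': "v \<bullet> (J *\<^sub>v v) = 2^(a+1) * e" using Q unfolding Qf_def .
  have G1: "orth_sum (hypH 1) J *\<^sub>v mkv k 1 (2^a*(1-e)) v = mkv k (2^a*(1-e)) 1 (J *\<^sub>v v)"
    using orth_mult[OF J v] .
  have G2: "orth_sum (hypH 1) J *\<^sub>v mkv k r (2^a*q) (t \<cdot>\<^sub>v v) = mkv k (2^a*q) r (t \<cdot>\<^sub>v (J *\<^sub>v v))"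
    using orth_mult[OF J tv] mmv_smult[OF J v] by simp
  have s1: "v \<bullet> (t \<cdot>\<^sub>v (J *\<^sub>v v)) = t * (2^(a+1) * e)" using Q' J v by simp
  have s2: "(t \<cdot>\<^sub>v v) \<bullet> (J *\<^sub>v v) = t * (2^(a+1) * e)" using Q' J v by simp
  have s3: "(t \<cdot>\<^sub>v v) \<bullet> (t \<cdot>\<^sub>v (J *\<^sub>v v)) = t * (t * (2^(a+1) * e))" using Q' J v by simp
  have s4: "((- (D * r)) \<cdot>\<^sub>v p) \<bullet> v = - (D * r)" "((- (D * r)) \<cdot>\<^sub>v p) \<bullet> (t \<cdot>\<^sub>v v) = - (D * r) * t"
    "(D \<cdot>\<^sub>v p) \<bullet> v = D" "(D \<cdot>\<^sub>v p) \<bullet> (t \<cdot>\<^sub>v v) = D * t"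
    using p v pv by auto
  show ?thesis
  proof (rule prim2[OF orth_carrier[OF J], of "mkv k 1 (2^a*(1-e)) v" "mkv k r (2^a*q) (t \<cdot>\<^sub>v v)"
        "mkv k (D*t) 0 ((- (D * r)) \<cdot>\<^sub>v p)" "mkv k (-D) 0 (D \<cdot>\<^sub>v p)"])
    show "anisoA \<rho> (2 ^ a) \<in> carrier_mat 2 2" by (rule anisoA_idx)
  qed (simp_all only: G1 G2 mkv_sp[OF v Jv] mkv_sp[OF v tJv] mkv_sp[OF tv Jv] mkv_sp[OF tv tJv]
        mkv_sp[OF Dp(2) v] mkv_sp[OF Dp(2) tv] mkv_sp[OF Dp(3) v] mkv_sp[OF Dp(3) tv] anisoA_idx
        Q' s1 s2 s3 s4 mkv_carrier2 v p tv add_2_eq_Suc, 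
      simp_all add: algebra_simps D D' D'' rho q_def power2_eq_square)
qed




lemma part_b:
  fixes J :: "'a::idom mat"
  assumes R: "dyadic_local_int_ring TYPE('a)" and rho: "\<rho> dvd 1"
    and J: "J \<in> carrier_mat k k" and e: "\<epsilon> dvd 1"
    and pr: "prim_represents_elem k J (2 ^ (a + 1) * \<epsilon>)"
  shows "prim_represents (2 + k) (orth_sum (hypH 1) J) 2 (hypH (2 ^ a)) \<and>
        prim_represents (2 + k) (orth_sum (hypH 1) J) 2 (anisoA \<rho> (2 ^ a))"
proof -
  obtain v where v: "primitive_vec k v" "Qf J v = 2 ^ (a + 1) * \<epsilon>"
    using pr unfolding prim_represents_elem_def by blast
  have vc: "v \<in> carrier_vec k" using v(1) unfolding primitive_vec_def by blast
  obtain p where p: "p \<in> carrier_vec k" "p \<bullet> v = 1" using fun_of_prim[OF v(1)] by blast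
  obtain e' where e': "\<epsilon> * e' = 1" using e by (metis dvdE)
  have H: "prim_represents (2 + k) (orth_sum (hypH 1) J) 2 (hypH (2 ^ a))"
    using part_bH[OF J vc p v(2) e'] .
  obtain t where t: "2 dvd (\<rho> * e' - t ^ 2)" using frob[OF R] by blast
  have C: "2 dvd (\<rho> - \<epsilon> * t ^ 2)"
  proof -
    have "\<rho> - \<epsilon> * t ^ 2 = \<epsilon> * (\<rho> * e' - t ^ 2)"
      using e' by (simp add: algebra_simps)
    then show ?thesis using t by simp
  qed
  have Bu: "(- (1 - 2 * \<epsilon> * t)) dvd 1"
  proof -
    have "(-1 + 2 * (\<epsilon> * t)) dvd 1" by (rule unit_plus2[OF R]) simp
    then show ?thesis by (simp add: algebra_simps)
  qed
  obtain r where r: "(1 - \<epsilon>) * r ^ 2 + (- (1 - 2 * \<epsilon> * t)) * r + (\<rho> - \<epsilon> * t ^ 2) = 0" "2 dvd (r - 0)"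
    using hensel[OF R Bu, of "1 - \<epsilon>" 0 "\<rho> - \<epsilon> * t ^ 2"] C by auto
  have eq: "(1 - \<epsilon>) * r ^ 2 - (1 - 2 * \<epsilon> * t) * r + (\<rho> - \<epsilon> * t ^ 2) = 0"
    using r(1) by (simp add: algebra_simps)
  have tu: "t dvd 1"
  proof -
    obtain x where x: "\<rho> * e' - t ^ 2 = 2 * x" using t by blast
    have "(\<rho> * e') dvd 1" using rho e' by (metis dvd_mult_left dvd_triv_left mult_dvd_mono one_dvd dvd_refl mult_1)
    then have "(\<rho> * e' + 2 * (- x)) dvd 1" by (rule unit_plus2[OF R])
    moreover have "\<rho> * e' + 2 * (- x) = t ^ 2" using x by (simp add: algebra_simps)
    ultimately have "t ^ 2 dvd 1" by simp
    then show ?thesis by (simp add: power2_eq_square)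
  qed
  obtain y where y: "r = 2 * y" using r(2) by auto
  have "(t + 2 * (- y)) dvd 1" by (rule unit_plus2[OF R tu])
  then obtain D where D0: "1 = (t + 2 * (- y)) * D" by blast
  have D: "D * (t - r) = 1" using D0 y by (simp add: algebra_simps)
  have A: "prim_represents (2 + k) (orth_sum (hypH 1) J) 2 (anisoA \<rho> (2 ^ a))"
    using part_bA[OF J vc p v(2) eq D] .
  show ?thesis using H A by blast
qed




lemma hp_idx: "(hypH_pow n :: 'a::comm_ring_1 mat) \<in> carrier_mat (2*n) (2*n) \<and>
  (\<forall>i j. i < 2*n \<longrightarrow> j < 2*n \<longrightarrow> (hypH_pow n :: 'a mat) $$ (i,j) = (if i div 2 = j div 2 \<and> i \<noteq> j then 1 else 0))"
proof (induction n)
  case 0 then show ?case by simp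
next
  case (Suc n)
  have c: "(hypH_pow n :: 'a mat) \<in> carrier_mat (2*n) (2*n)" using Suc by blast
  have car: "(hypH_pow (Suc n) :: 'a mat) \<in> carrier_mat (2*Suc n) (2*Suc n)"
    using orth_carrier[OF c] by simp
  have "(hypH_pow (Suc n) :: 'a mat) $$ (i,j) = (if i div 2 = j div 2 \<and> i \<noteq> j then 1 else 0)"
    if ij: "i < 2 * Suc n" "j < 2 * Suc n" for i j
  proof -
    have e: "(hypH_pow (Suc n) :: 'a mat) $$ (i, j) = (if i < 2 then if j < 2 then hypH 1 $$ (i,j) else 0
       else if j < 2 then 0 else hypH_pow n $$ (i - 2, j - 2))"
      unfolding hypH_pow.simps orth_sum_def using ij c by (simp add: hypH_idx(3,4))
    show ?thesis
    proof (cases "i < 2 \<and> j < 2")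
      case True then show ?thesis unfolding e by (auto simp: hypH_idx(1))
    next
      case False
      show ?thesis
      proof (cases "i < 2 \<or> j < 2")
        case True then show ?thesis unfolding e using False by auto
      next
        case F2: False
        have "hypH_pow n $$ (i - 2, j - 2) = (if (i-2) div 2 = (j-2) div 2 \<and> i - 2 \<noteq> j - 2 then (1::'a) else 0)"
          using Suc.IH ij F2 by auto
        moreover have "((i-2) div 2 = (j-2) div 2 \<and> i - 2 \<noteq> j - 2) = (i div 2 = j div 2 \<and> i \<noteq> j)"
        proof -
          obtain i' where i': "i = i' + 2" using F2 by (metis add.commute le_add_diff_inverse not_less)
          obtain j' where j': "j = j' + 2" using F2 by (metis add.commute le_add_diff_inverse not_less)
          show ?thesis unfolding i' j' by simp
        qed
        ultimately show ?thesis unfolding e using F2 by auto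
      qed
    qed
  qed
  then show ?case using car by blast
qed

lemma hp_mult: assumes x: "x \<in> carrier_vec (2*n)" and i: "i < 2*n"
  shows "((hypH_pow n :: 'a::comm_ring_1 mat) *\<^sub>v x) $ i = x $ (if even i then i + 1 else i - 1)"
proof -
  let ?q = "if even i then i + 1 else i - 1"
  have q: "?q < 2*n" using i by auto
  have c: "(hypH_pow n :: 'a mat) \<in> carrier_mat (2*n) (2*n)" using hp_idx by blast
  have "((hypH_pow n :: 'a mat) *\<^sub>v x) $ i = (\<Sum>j\<in>{0..<2*n}. (hypH_pow n :: 'a mat) $$ (i,j) * x $ j)"
    using c i x by (simp add: scalar_prod_def row_def)
  also have "\<dots> = (\<Sum>j\<in>{0..<2*n}. if j = ?q then x $ j else 0)"
  proof (rule sum.cong)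
    fix j assume "j \<in> {0..<2*n}"
    then have j: "j < 2*n" by simp
    have eqv: "(i div 2 = j div 2 \<and> i \<noteq> j) = (j = ?q)"
    proof
      assume a: "i div 2 = j div 2 \<and> i \<noteq> j"
      have ij2: "i = 2*(i div 2) + i mod 2" "j = 2*(j div 2) + j mod 2" by simp_all
      have m: "i mod 2 = 0 \<or> i mod 2 = 1" "j mod 2 = 0 \<or> j mod 2 = 1" by auto
      show "j = ?q"
      proof (cases "even i")
        case True
        then have "i mod 2 = 0" by (simp add: even_iff_mod_2_eq_zero)
        then show ?thesis using True a ij2 m by auto
      next
        case False
        then have "i mod 2 = 1" by (simp add: odd_iff_mod_2_eq_one)
        then show ?thesis using False a ij2 m by auto
      qed
    next
      assume b: "j = ?q"
      show "i div 2 = j div 2 \<and> i \<noteq> j"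
      proof (cases "even i")
        case True
        then obtain m where "i = 2 * m" by (rule evenE)
        then show ?thesis using b True by simp
      next
        case False
        then obtain m where "i = 2 * m + 1" by (rule oddE)
        then show ?thesis using b False by simp
      qed
    qed
    have "(hypH_pow n :: 'a mat) $$ (i,j) = (if i div 2 = j div 2 \<and> i \<noteq> j then 1 else 0)"
      using hp_idx i j by blast
    then show "(hypH_pow n :: 'a mat) $$ (i,j) * x $ j = (if j = ?q then x $ j else 0)"
      unfolding eqv by simp
  qed simp
  also have "\<dots> = x $ ?q" using q by (simp add: sum.delta)
  finally show ?thesis .
qed

lemma sum_even_odd: "(\<Sum>r\<in>{0..<2*n}. f r) = (\<Sum>s\<in>{0..<n}. f (2*s) + f (2*s+1))"
  for f :: "nat \<Rightarrow> 'a::comm_monoid_add"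
proof (induction n)
  case 0 then show ?case by simp
next
  case (Suc n)
  have "{0..<2 * Suc n} = insert (2*n+1) (insert (2*n) {0..<2*n})" by auto
  then have "(\<Sum>r\<in>{0..<2*Suc n}. f r) = f (2*n+1) + (f (2*n) + (\<Sum>r\<in>{0..<2*n}. f r))" by simp
  then show ?case using Suc by (simp add: ac_simps)
qed

lemma hp_sp: assumes x: "x \<in> carrier_vec (2*n)" and y: "y \<in> carrier_vec (2*n)"
  shows "x \<bullet> ((hypH_pow n :: 'a::comm_ring_1 mat) *\<^sub>v y) = (\<Sum>s\<in>{0..<n}. x $ (2*s) * y $ (2*s+1) + x $ (2*s+1) * y $ (2*s))"
proof -
  have c: "(hypH_pow n :: 'a mat) \<in> carrier_mat (2*n) (2*n)" using hp_idx by blast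
  have "x \<bullet> ((hypH_pow n :: 'a mat) *\<^sub>v y) = (\<Sum>r\<in>{0..<2*n}. x $ r * ((hypH_pow n :: 'a mat) *\<^sub>v y) $ r)"
    using c unfolding scalar_prod_def by simp
  also have "\<dots> = (\<Sum>s\<in>{0..<n}. x $ (2*s) * ((hypH_pow n :: 'a mat) *\<^sub>v y) $ (2*s) + x $ (2*s+1) * ((hypH_pow n :: 'a mat) *\<^sub>v y) $ (2*s+1))"
    by (rule sum_even_odd)
  also have "\<dots> = (\<Sum>s\<in>{0..<n}. x $ (2*s) * y $ (2*s+1) + x $ (2*s+1) * y $ (2*s))"
    by (rule sum.cong) (auto simp: hp_mult[OF y])
  finally show ?thesis .
qed

lemma gram_entry:
  fixes G :: "'a::comm_ring_1 mat"
  assumes X: "X \<in> carrier_mat N m" and G: "G \<in> carrier_mat N N" and ij: "i < m" "j < m"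
  shows "(transpose_mat X * G * X) $$ (i, j) = col X i \<bullet> (G *\<^sub>v col X j)"
proof -
  have "(transpose_mat X * G * X) $$ (i, j) = row (transpose_mat X * G) i \<bullet> col X j"
    by (rule index_mult_mat(1)) (use X G ij in auto)
  also have "row (transpose_mat X * G) i = transpose_mat G *\<^sub>v col X i"
  proof -
    have "row (transpose_mat X * G) i = col (transpose_mat (transpose_mat X * G)) i"
      using X G ij by (subst col_transpose) auto
    also have "transpose_mat (transpose_mat X * G) = transpose_mat G * X"
      using transpose_mult[of "transpose_mat X" m N G N] X G by simp
    also have "col (transpose_mat G * X) i = transpose_mat G *\<^sub>v col X i"
      using G X ij by (intro col_mult2) auto
    finally show ?thesis .
  qed
  also have "(transpose_mat G *\<^sub>v col X i) \<bullet> col X j = col X i \<bullet> (G *\<^sub>v col X j)"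
  proof (rule transpose_vec_mult_scalar[of G N N])
    show "col X i \<in> carrier_vec N" "col X j \<in> carrier_vec N" using X by (metis carrier_matD(1) col_dim)+
  qed (use G in auto)
  finally show ?thesis .
qed




lemma part_c:
  fixes \<rho> :: "'a::idom"
  assumes R: "dyadic_local_int_ring TYPE('a)" and rho: "\<rho> dvd 1"
  shows "prim_represents 4 (hypH_pow 2 :: 'a mat) 2 (hypH (2 ^ a)) \<and>
        prim_represents 4 (hypH_pow 2 :: 'a mat) 2 (anisoA \<rho> (2 ^ a))"
proof -
  let ?J = "hypH_pow 1 :: 'a mat"
  have c1: "?J \<in> carrier_mat (2*1) (2*1)" using hp_idx by blast
  then have c: "?J \<in> carrier_mat 2 2" by simp
  define v :: "'a vec" where "v = vec 2 (\<lambda>i. if i = 0 then 1 else 2 ^ a)"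
  have v1: "v \<in> carrier_vec (2*1)" unfolding v_def by simp
  then have vc: "v \<in> carrier_vec 2" by simp
  have "Qf ?J v = (\<Sum>s\<in>{0..<1}. v $ (2*s) * v $ (2*s+1) + v $ (2*s+1) * v $ (2*s))"
    unfolding Qf_def by (rule hp_sp[OF v1 v1])
  also have "\<dots> = 2 ^ (a + 1) * 1" unfolding v_def by simp
  finally have Q: "Qf ?J v = 2 ^ (a + 1) * 1" .
  have "unit_vec 2 0 \<bullet> v = 1" using vc unfolding v_def by simp
  then have "primitive_vec 2 v" using prim_vec_of_fun[OF vc unit_vec_carrier] by blast
  then have pr: "prim_represents_elem 2 ?J (2 ^ (a + 1) * 1)"
    unfolding prim_represents_elem_def using Q by blast
  have e: "(hypH_pow 2 :: 'a mat) = orth_sum (hypH 1) ?J" by (simp add: numeral_2_eq_2)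
  show ?thesis using part_b[OF R rho c _ pr] unfolding e by simp
qed

lemma part_d:
  fixes L :: "'a::idom mat"
  assumes R: "dyadic_local_int_ring TYPE('a)" and ev: "even_lattice n L"
  shows "prim_represents (2 * n) (hypH_pow n) n L"
proof -
  have Lc: "L \<in> carrier_mat n n" and sym: "transpose_mat L = L"
    using ev unfolding even_lattice_def lattice_def by auto
  have symij: "L $$ (i, j) = L $$ (j, i)" if "i < n" "j < n" for i j
    using sym that Lc by (metis carrier_matD(1,2) index_transpose_mat(1))
  have "\<exists>h. L $$ (i, i) = 2 * h" if i: "i < n" for i
  proof -
    have "(2::'a) dvd Qf L (unit_vec n i)" using ev unfolding even_lattice_def by simp
    moreover have "Qf L (unit_vec n i) = L $$ (i, i)"
      unfolding Qf_def using Lc i by simp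
    ultimately show ?thesis by auto
  qed
  then obtain h where h: "\<And>i. i < n \<Longrightarrow> L $$ (i, i) = 2 * h i" by metis
  define U where "U = (\<lambda>i j. if i < j then L $$ (i, j) else if i = j then h i else 0)"
  define X :: "'a mat" where "X = mat (2*n) n (\<lambda>(r, j). if even r then (if r div 2 = j then 1 else 0) else U (r div 2) j)"
  define M :: "'a mat" where "M = mat n (2*n) (\<lambda>(i, r). if r = 2 * i then 1 else 0)"
  have X: "X \<in> carrier_mat (2*n) n" unfolding X_def by simp
  have M: "M \<in> carrier_mat n (2*n)" unfolding M_def by simp
  have Hc: "(hypH_pow n :: 'a mat) \<in> carrier_mat (2*n) (2*n)" using hp_idx by blast
  have MX: "M * X = 1\<^sub>m n"
  proof (rule eq_matI)
    fix i j assume "i < dim_row (1\<^sub>m n :: 'a mat)" "j < dim_col (1\<^sub>m n :: 'a mat)"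
    then have ij: "i < n" "j < n" by auto
    have "(M * X) $$ (i, j) = (\<Sum>r\<in>{0..<2*n}. M $$ (i, r) * X $$ (r, j))"
      using M X ij by (simp add: scalar_prod_def row_def col_def)
    also have "\<dots> = (\<Sum>r\<in>{0..<2*n}. if r = 2 * i then X $$ (r, j) else 0)"
      by (rule sum.cong) (use ij in \<open>auto simp: M_def\<close>)
    also have "\<dots> = X $$ (2 * i, j)" using ij by (simp add: sum.delta)
    also have "\<dots> = 1\<^sub>m n $$ (i, j)" using ij unfolding X_def by auto
    finally show "(M * X) $$ (i, j) = 1\<^sub>m n $$ (i, j)" .
  qed (use M X in auto)
  have XG: "transpose_mat X * hypH_pow n * X = L"
  proof (rule eq_matI)
    fix j l assume "j < dim_row L" "l < dim_col L"
    then have jl: "j < n" "l < n" using Lc by auto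
    have cj: "col X j \<in> carrier_vec (2*n)" "col X l \<in> carrier_vec (2*n)" using X by (metis carrier_matD(1) col_dim)+
    have "(transpose_mat X * hypH_pow n * X) $$ (j, l) = col X j \<bullet> (hypH_pow n *\<^sub>v col X l)"
      by (rule gram_entry[OF X Hc jl])
    also have "\<dots> = (\<Sum>s\<in>{0..<n}. col X j $ (2*s) * col X l $ (2*s+1) + col X j $ (2*s+1) * col X l $ (2*s))"
      by (rule hp_sp[OF cj])
    also have "\<dots> = (\<Sum>s\<in>{0..<n}. (if s = j then U s l else 0) + (if s = l then U s j else 0))"
      by (rule sum.cong) (use jl in \<open>auto simp: X_def col_def\<close>)
    also have "\<dots> = U j l + U l j" using jl by (simp add: sum.distrib sum.delta)
    also have "\<dots> = L $$ (j, l)"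
      unfolding U_def using jl h symij by auto
    finally show "(transpose_mat X * hypH_pow n * X) $$ (j, l) = L $$ (j, l)" .
  qed (use X Lc in auto)
  show ?thesis by (rule prim_rep_gen[OF X M MX XG])
qed



theorem lemma4p1:
  fixes \<rho> :: "'a::idom"
  assumes R: "dyadic_local_int_ring TYPE('a)"
    and rho_unit: "\<rho> dvd 1"
    and Delta: "(1 - 4 * \<rho>) dvd 1 \<and> \<not> (\<exists>y. 1 - 4 * \<rho> = y ^ 2)"
  shows
    "(\<forall>k (J::'a mat) a::nat. lattice k J \<and> isotropic k J \<longrightarrow>
        prim_represents (2 + k) (orth_sum (hypH 1) J) 2 (hypH (2 ^ a)))
   \<and> (\<forall>k (J::'a mat) (a::nat) \<epsilon>. lattice k J \<and> \<epsilon> dvd 1 \<and>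
        prim_represents_elem k J (2 ^ (a + 1) * \<epsilon>) \<longrightarrow>
        prim_represents (2 + k) (orth_sum (hypH 1) J) 2 (hypH (2 ^ a)) \<and>
        prim_represents (2 + k) (orth_sum (hypH 1) J) 2 (anisoA \<rho> (2 ^ a)))
   \<and> (\<forall>a::nat. prim_represents 4 (hypH_pow 2 :: 'a mat) 2 (hypH (2 ^ a)) \<and>
        prim_represents 4 (hypH_pow 2 :: 'a mat) 2 (anisoA \<rho> (2 ^ a)))
   \<and> (\<forall>n (L::'a mat). n \<ge> 1 \<and> even_lattice n L \<longrightarrow>
        prim_represents (2 * n) (hypH_pow n) n L)"
proof (intro conjI allI impI)
  fix k a and J :: "'a mat"
  assume h: "lattice k J \<and> isotropic k J"
  have Jc: "J \<in> carrier_mat k k" using conjunct1[OF h] unfolding lattice_def by (rule conjunct1)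
  have iso: "isotropic k J" by (rule conjunct2[OF h])
  obtain w p where w: "w \<in> carrier_vec k" and p: "p \<in> carrier_vec k" "p \<bullet> w = 1" "Qf J w = 0"
    using prim_iso[OF R Jc iso] by blast
  show "prim_represents (2 + k) (orth_sum (hypH 1) J) 2 (hypH (2 ^ a))"
    by (rule part_a[OF Jc w p])
next
  fix k a \<epsilon> and J :: "'a mat"
  assume h: "lattice k J \<and> \<epsilon> dvd 1 \<and> prim_represents_elem k J (2 ^ (a + 1) * \<epsilon>)"
  have Jc: "J \<in> carrier_mat k k" using conjunct1[OF h] unfolding lattice_def by (rule conjunct1)
  have e: "\<epsilon> dvd 1" by (rule conjunct1[OF conjunct2[OF h]])
  have pr: "prim_represents_elem k J (2 ^ (a + 1) * \<epsilon>)" by (rule conjunct2[OF conjunct2[OF h]])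
  note r = part_b[OF R rho_unit Jc e pr]
  show "prim_represents (2 + k) (orth_sum (hypH 1) J) 2 (hypH (2 ^ a))" by (rule conjunct1[OF r])
  show "prim_represents (2 + k) (orth_sum (hypH 1) J) 2 (anisoA \<rho> (2 ^ a))" by (rule conjunct2[OF r])
next
  fix a :: nat
  show "prim_represents 4 (hypH_pow 2 :: 'a mat) 2 (hypH (2 ^ a))"
    by (rule conjunct1[OF part_c[OF R rho_unit]])
  show "prim_represents 4 (hypH_pow 2 :: 'a mat) 2 (anisoA \<rho> (2 ^ a))"
    by (rule conjunct2[OF part_c[OF R rho_unit]])
next
  fix n and L :: "'a mat"
  assume h: "1 \<le> n \<and> even_lattice n L"
  show "prim_represents (2 * n) (hypH_pow n) n L" by (rule part_d[OF R conjunct2[OF h]])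
qed

end
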